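(* Let $\lambda$ be a regular uncountable cardinal, let $\mathcal{C}=\langle\mathcal{C}_\alpha\mid\alpha<\lambda\rangle$ be a coherent sequence of length $\lambda$ in which every $\mathcal{C}_\alpha$ is finite, and let $S\subseteq\lambda$ be stationary. Suppose there is a club $F\subseteq\lambda$ such that for every $\alpha\in S\cap\mathrm{acc}(F)$, $F\cap\alpha\subseteq\bigcup\mathcal{C}_\alpha$. Then $\mathcal{C}$ has a thread.
   Context: For a set of ordinals $A$, $\mathrm{acc}(A)$ is the set of $\beta<\sup\{\alpha+1\mid\alpha\in A\}$ with $\beta=\sup(A\cap\beta)$. A coherent sequence of length $\lambda$ is $\mathcal{C}=\langle\mathcal{C}_\alpha\mid\alpha<\lambda\rangle$ where each $\mathcal{C}_\alpha$ is a nonempty set of closed unbounded subsets of $\alpha$ (for successor $\alpha=\beta+1$, $\mathcal{C}_\alpha=\{\{\beta\}\}$), such that for all $\beta<\lambda$, $C\in\mathcal{C}_\beta$ and $\alpha\in\mathrm{acc}(C)$, $C\cap\alpha\in\mathcal{C}_\alpha$. A thread through $\mathcal{C}$ is a club $D\subseteq\lambda$ with $D\cap\alpha\in\mathcal{C}_\alpha$ for all $\alpha\in\mathrm{acc}(D)$. *)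

theory Defs
  imports Main
begin

text \<open>The regular cardinal lambda is represented by a cardinal order relation r
(a well-order of initial order type lambda); the ordinals below lambda are the
elements of Field r, the ordinal alpha (as a set) is Order_Relation.underS r alpha,
and the ordinal lambda (as a set) is Field r.\<close>

definition lt :: "'a rel \<Rightarrow> 'a \<Rightarrow> 'a \<Rightarrow> bool" where
  "lt r x y \<longleftrightarrow> (x, y) \<in> r \<and> x \<noteq> y"

text \<open>sup X = b, for X a set of ordinals below b: every ordinal below b is
exceeded by an element of X (vacuous for b = 0).\<close>
definition sup_is :: "'a rel \<Rightarrow> 'a set \<Rightarrow> 'a \<Rightarrow> bool" where
  "sup_is r X b \<longleftrightarrow> (\<forall>d. lt r d b \<longrightarrow> (\<exists>x\<in>X. lt r d x))"

text \<open>acc(A) as in the paper: b < sup{a+1 | a in A}, i.e. b \<le> some a in A,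
and b = sup(A \<inter> b).\<close>
definition acc :: "'a rel \<Rightarrow> 'a set \<Rightarrow> 'a set" where
  "acc r A = {b \<in> Field r. (\<exists>a\<in>A. (b, a) \<in> r) \<and> sup_is r (A \<inter> underS r b) b}"

text \<open>Closed unbounded subset of the initial segment B (B = Field r for lambda,
B = underS r a for an ordinal a < lambda).\<close>
definition club_in :: "'a rel \<Rightarrow> 'a set \<Rightarrow> 'a set \<Rightarrow> bool" where
  "club_in r B C \<longleftrightarrow> C \<subseteq> B
     \<and> (\<forall>g\<in>B. \<exists>c\<in>C. (g, c) \<in> r)
     \<and> (\<forall>g\<in>B. (C \<inter> underS r g \<noteq> {} \<and> sup_is r (C \<inter> underS r g) g) \<longrightarrow> g \<in> C)"

definition stationary :: "'a rel \<Rightarrow> 'a set \<Rightarrow> bool" where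
  "stationary r S \<longleftrightarrow> S \<subseteq> Field r \<and> (\<forall>C. club_in r (Field r) C \<longrightarrow> S \<inter> C \<noteq> {})"

definition is_succ :: "'a rel \<Rightarrow> 'a \<Rightarrow> 'a \<Rightarrow> bool" where
  "is_succ r a b \<longleftrightarrow> lt r b a \<and> (\<forall>g. lt r b g \<longrightarrow> (a, g) \<in> r)"

definition coherent_seq :: "'a rel \<Rightarrow> ('a \<Rightarrow> 'a set set) \<Rightarrow> bool" where
  "coherent_seq r Cs \<longleftrightarrow>
     (\<forall>a\<in>Field r. Cs a \<noteq> {} \<and> (\<forall>C\<in>Cs a. club_in r (underS r a) C))
   \<and> (\<forall>a\<in>Field r. \<forall>b. is_succ r a b \<longrightarrow> Cs a = {{b}})
   \<and> (\<forall>b\<in>Field r. \<forall>C\<in>Cs b. \<forall>a\<in>acc r C. C \<inter> underS r a \<in> Cs a)"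

definition is_thread :: "'a rel \<Rightarrow> ('a \<Rightarrow> 'a set set) \<Rightarrow> 'a set \<Rightarrow> bool" where
  "is_thread r Cs D \<longleftrightarrow> club_in r (Field r) D
     \<and> (\<forall>a\<in>acc r D. D \<inter> underS r a \<in> Cs a)"

end

theory Submission
  imports Defs
begin

locale L =
  fixes r :: "'a rel"
  assumes co: "Card_order r" and reg: "regularCard r" and unc: "(natLeq, r) \<in> ordLess"
begin
lemma WO: "Well_order r" using co card_order_on_well_order_on by blast
lemma rrefl: "x \<in> Field r \<Longrightarrow> (x,x) \<in> r"
  using WO unfolding well_order_on_def linear_order_on_def partial_order_on_def preorder_on_def refl_on_def by blast
lemma rtrans: "(x,y) \<in> r \<Longrightarrow> (y,z) \<in> r \<Longrightarrow> (x,z) \<in> r"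
  using WO unfolding well_order_on_def linear_order_on_def partial_order_on_def preorder_on_def by (meson transE)
lemma rantisym: "(x,y) \<in> r \<Longrightarrow> (y,x) \<in> r \<Longrightarrow> x = y"
  using WO unfolding well_order_on_def linear_order_on_def partial_order_on_def antisym_def by blast
lemma rtotal: "x \<in> Field r \<Longrightarrow> y \<in> Field r \<Longrightarrow> (x,y) \<in> r \<or> (y,x) \<in> r"
  using WO unfolding well_order_on_def linear_order_on_def total_on_def by (metis rrefl)
lemma rwf: "wf (r - Id)" using WO unfolding well_order_on_def by blast
lemma inf: "\<not> finite (Field r)"
proof -
  have "(r, card_of (Field r)) \<in> ordIso" using co Card_order_iff_ordIso_card_of by blast
  then have "(natLeq, card_of (Field r)) \<in> ordLeq" using unc ordLess_imp_ordLeq ordLeq_ordIso_trans by blast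
  then show ?thesis using infinite_iff_natLeq_ordLeq by blast
qed
lemma nomax: "x \<in> Field r \<Longrightarrow> \<exists>y \<in> Field r. lt r x y"
  using infinite_Card_order_limit[OF co inf] unfolding lt_def by blast
lemma Fne: "Field r \<noteq> {}" using inf by auto
lemma countable_bound: assumes "range (f::nat \<Rightarrow> 'a) \<subseteq> Field r"
  shows "\<exists>a\<in>Field r. \<forall>n. (f n, a) \<in> r"
proof -
  have "\<not> cofinal (range f) r"
  proof
    assume "cofinal (range f) r"
    then have "(card_of (range f), r) \<in> ordIso" using reg assms unfolding regularCard_def by blast
    moreover have "(card_of (range f), natLeq) \<in> ordLeq"
      using card_of_image[of f UNIV] card_of_nat ordLeq_ordIso_trans by blast
    ultimately have "(r, natLeq) \<in> ordLeq" using ordIso_symmetric ordIso_ordLeq_trans by blast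
    then show False using unc not_ordLess_ordLeq by blast
  qed
  then obtain a where a: "a \<in> Field r" "\<forall>b\<in>range f. a = b \<or> (a,b) \<notin> r" unfolding cofinal_def by blast
  have "(f n, a) \<in> r" for n
  proof -
    have fn: "f n \<in> Field r" using assms by auto
    show ?thesis using a(2) rtotal[OF a(1) fn] rrefl[OF fn] by (cases "a = f n") auto
  qed
  then show ?thesis using a by blast
qed

lemma uS[simp]: "b \<in> underS r a \<longleftrightarrow> lt r b a" unfolding underS_def lt_def by auto
lemma ltF: "lt r x y \<Longrightarrow> x \<in> Field r \<and> y \<in> Field r" unfolding lt_def by (auto intro: FieldI1 FieldI2)
lemma lt_irr[simp]: "\<not> lt r x x" unfolding lt_def by auto
lemma lt_le: "lt r x y \<Longrightarrow> (x,y) \<in> r" unfolding lt_def by auto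
lemma lt_le_trans: "lt r x y \<Longrightarrow> (y,z) \<in> r \<Longrightarrow> lt r x z"
  unfolding lt_def using rtrans rantisym by blast
lemma le_lt_trans: "(x,y) \<in> r \<Longrightarrow> lt r y z \<Longrightarrow> lt r x z"
  unfolding lt_def using rtrans rantisym by blast
lemma lt_trans: "lt r x y \<Longrightarrow> lt r y z \<Longrightarrow> lt r x z"
  using lt_le_trans lt_le by blast
lemma not_lt: "x \<in> Field r \<Longrightarrow> y \<in> Field r \<Longrightarrow> \<not> lt r x y \<Longrightarrow> (y,x) \<in> r"
  unfolding lt_def using rtotal rrefl by blast
lemma lt_not_le: "lt r x y \<Longrightarrow> (y,x) \<notin> r"
  unfolding lt_def using rantisym by blast
lemma max_ex: "x \<in> Field r \<Longrightarrow> y \<in> Field r \<Longrightarrow> \<exists>m\<in>Field r. (x,m) \<in> r \<and> (y,m) \<in> r"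
  using rtotal rrefl by blast
lemma finite_bound: "finite X \<Longrightarrow> X \<subseteq> Field r \<Longrightarrow> \<exists>m\<in>Field r. \<forall>x\<in>X. (x,m) \<in> r"
proof (induction X rule: finite_induct)
  case empty then show ?case using Fne by blast
next
  case (insert x X)
  then obtain m where m: "m \<in> Field r" "\<forall>x\<in>X. (x,m) \<in> r" by auto
  obtain m' where "m' \<in> Field r" "(x,m') \<in> r" "(m,m') \<in> r" using max_ex[of x m] insert m by auto
  then show ?case using m rtrans by blast
qed
end

locale M = L +
  fixes Cs :: "'a \<Rightarrow> 'a set set" and S F :: "'a set"
  assumes coh: "coherent_seq r Cs" and fin: "\<forall>a\<in>Field r. finite (Cs a)"
    and stat: "stationary r S" and clF: "club_in r (Field r) F"
    and hyp: "\<forall>a\<in>S \<inter> acc r F. F \<inter> underS r a \<subseteq> \<Union>(Cs a)"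
begin
definition limpt :: "'a set \<Rightarrow> 'a \<Rightarrow> bool" where
  "limpt C b \<longleftrightarrow> C \<inter> underS r b \<noteq> {} \<and> sup_is r (C \<inter> underS r b) b"
definition B :: "'a set" where "B = {b\<in>Field r. limpt F b}"

lemma FF: "F \<subseteq> Field r" using clF unfolding club_in_def by blast
lemma Fnext: "x \<in> Field r \<Longrightarrow> \<exists>c\<in>F. lt r x c"
proof -
  assume x: "x \<in> Field r"
  obtain y where y: "y \<in> Field r" "lt r x y" using nomax[OF x] by blast
  obtain c where "c \<in> F" "(y,c) \<in> r" using clF y unfolding club_in_def by blast
  then show ?thesis using y lt_le_trans by blast
qed

lemma seq_lim:
  assumes f: "\<And>n. f n \<in> F \<and> lt r (f n) (f (Suc n))"
  shows "\<exists>s\<in>B. \<forall>n. lt r (f n) s"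
proof -
  have rf: "range f \<subseteq> Field r" using f FF by blast
  obtain a where a: "a \<in> Field r" "\<forall>n. (f n, a) \<in> r" using countable_bound[OF rf] by blast
  define U where "U = {u\<in>Field r. \<forall>n. (f n, u) \<in> r}"
  have "a \<in> U" using a U_def by blast
  then obtain s where s: "s \<in> U" "\<And>y. (y,s) \<in> r - Id \<Longrightarrow> y \<notin> U"
    using wfE_min[OF rwf] by metis
  have lts: "lt r (f n) s" for n
    using f[of n] s(1) unfolding U_def using lt_le_trans by blast
  have sF: "s \<in> Field r" using s U_def by blast
  have "limpt F s" unfolding limpt_def sup_is_def
  proof
    show "F \<inter> underS r s \<noteq> {}" using lts[of 0] f[of 0] by auto
    show "\<forall>d. lt r d s \<longrightarrow> (\<exists>x\<in>F \<inter> underS r s. lt r d x)"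
    proof (intro allI impI)
      fix d assume d: "lt r d s"
      then have "d \<notin> U" using s(2) unfolding lt_def by blast
      moreover have "d \<in> Field r" using ltF d by blast
      ultimately obtain n where "(f n, d) \<notin> r" unfolding U_def by blast
      then have "lt r d (f n)" using not_lt \<open>d \<in> Field r\<close> rf by blast
      then show "\<exists>x\<in>F \<inter> underS r s. lt r d x" using lts[of n] f[of n] by auto
    qed
  qed
  then show ?thesis using sF lts B_def by blast
qed

lemma B_unb: assumes g: "g \<in> Field r" and h: "h \<in> Field r"
  shows "\<exists>s\<in>B. lt r g s \<and> (h,s) \<in> r"
proof -
  obtain m where m: "m \<in> Field r" "(g,m) \<in> r" "(h,m) \<in> r" using max_ex[OF g h] by blast
  obtain c0 where c0: "c0 \<in> F" "lt r m c0" using Fnext[OF m(1)] by blast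
  define f where "f = rec_nat c0 (\<lambda>_ x. SOME c. c \<in> F \<and> lt r x c)"
  have f0: "f 0 = c0" unfolding f_def by simp
  have fS: "f (Suc n) = (SOME c. c \<in> F \<and> lt r (f n) c)" for n unfolding f_def by simp
  have fF: "f n \<in> F" for n
  proof (induction n)
    case 0 then show ?case using f0 c0 by simp
  next
    case (Suc n)
    then have "\<exists>c. c \<in> F \<and> lt r (f n) c" using Fnext FF by blast
    then show ?case unfolding fS by (rule someI2_ex) blast
  qed
  have fl: "lt r (f n) (f (Suc n))" for n
  proof -
    have "\<exists>c. c \<in> F \<and> lt r (f n) c" using Fnext FF fF by blast
    then show ?thesis unfolding fS by (rule someI2_ex) blast
  qed
  obtain s where s: "s \<in> B" "\<forall>n. lt r (f n) s" using seq_lim[of f] fF fl by blast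
  have "lt r m s" using s(2) c0 f0 lt_trans by metis
  then show ?thesis using s m le_lt_trans lt_le by blast
qed

lemma X_club: assumes g: "g \<in> Field r" shows "club_in r (Field r) {s\<in>B. lt r g s}"
  unfolding club_in_def
proof (intro conjI ballI impI)
  show "{s \<in> B. lt r g s} \<subseteq> Field r" using B_def by blast
  fix h assume "h \<in> Field r"
  then show "\<exists>c\<in>{s \<in> B. lt r g s}. (h, c) \<in> r" using B_unb g by blast
next
  fix h assume h: "h \<in> Field r"
    and hc: "{s \<in> B. lt r g s} \<inter> underS r h \<noteq> {} \<and> sup_is r ({s \<in> B. lt r g s} \<inter> underS r h) h"
  then obtain x where x: "x \<in> B" "lt r g x" "lt r x h" by auto
  then have gh: "lt r g h" using lt_trans by blast
  have "limpt F h" unfolding limpt_def sup_is_def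
  proof
    obtain y where "y \<in> F" "lt r y x" using x(1) unfolding B_def limpt_def by auto
    then have "lt r y h" using x(3) lt_trans by blast
    then show "F \<inter> underS r h \<noteq> {}" using \<open>y \<in> F\<close> by auto
    show "\<forall>d. lt r d h \<longrightarrow> (\<exists>x\<in>F \<inter> underS r h. lt r d x)"
    proof (intro allI impI)
      fix d assume d: "lt r d h"
      have "\<exists>x\<in>{s \<in> B. lt r g s} \<inter> underS r h. lt r d x" using hc d unfolding sup_is_def by blast
      then obtain x where x: "x \<in> B" "lt r x h" "lt r d x" by auto
      have "\<exists>y\<in>F \<inter> underS r x. lt r d y" using x unfolding B_def limpt_def sup_is_def by blast
      then obtain y where "y \<in> F" "lt r y x" "lt r d y" by auto
      moreover have "lt r y h" using \<open>lt r y x\<close> x(2) lt_trans by blast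
      ultimately show "\<exists>x\<in>F \<inter> underS r h. lt r d x" by auto
    qed
  qed
  then show "h \<in> {s \<in> B. lt r g s}" using h gh B_def by blast
qed

lemma S2_unb: "g \<in> Field r \<Longrightarrow> \<exists>a\<in>S \<inter> B. lt r g a"
proof -
  assume g: "g \<in> Field r"
  have "S \<inter> {s\<in>B. lt r g s} \<noteq> {}" using X_club[OF g] stat unfolding stationary_def by blast
  then show ?thesis by blast
qed

lemma B_acc: assumes "a \<in> B" shows "a \<in> acc r F"
proof -
  have a: "a \<in> Field r" "limpt F a" using assms B_def by auto
  obtain c where "c \<in> F" "(a,c) \<in> r" using clF a(1) unfolding club_in_def by blast
  then show ?thesis using a unfolding acc_def limpt_def by blast
qed
end

context M begin

lemma bound_below:
  assumes z: "lt r z b" and "finite A"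
  shows "(\<forall>C\<in>A. \<exists>d. lt r d b \<and> P C d) \<Longrightarrow> \<exists>m. lt r m b \<and> (\<forall>C\<in>A. \<exists>d. (d,m) \<in> r \<and> P C d)"
  using \<open>finite A\<close>
proof (induction A rule: finite_induct)
  case empty then show ?case using z by blast
next
  case (insert C A)
  then obtain m where m: "lt r m b" "\<forall>C\<in>A. \<exists>d. (d,m) \<in> r \<and> P C d" by blast
  obtain d where d: "lt r d b" "P C d" using insert.prems by blast
  have mF: "m \<in> Field r" and dF: "d \<in> Field r" using ltF m d by auto
  show ?case
  proof (cases "(m,d) \<in> r")
    case True
    have "\<forall>C\<in>A. \<exists>d'. (d',d) \<in> r \<and> P C d'" using m(2) True rtrans by blast
    then show ?thesis using d rrefl[OF dF] by blast
  next
    case False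
    then have "(d,m) \<in> r" using rtotal mF dF by blast
    then show ?thesis using m d by blast
  qed
qed

lemma cover:
  assumes a: "a \<in> S \<inter> B" and b: "b \<in> B" and ba: "lt r b a"
  shows "\<exists>C\<in>Cs a. limpt C b"
proof (rule ccontr)
  assume no: "\<not> (\<exists>C\<in>Cs a. limpt C b)"
  have aF: "a \<in> Field r" using a B_def by blast
  have "a \<in> S \<inter> acc r F" using a B_acc by blast
  then have sub: "F \<inter> underS r a \<subseteq> \<Union>(Cs a)" using hyp by blast
  have lb: "limpt F b" using b B_def by blast
  then obtain z where z: "z \<in> F" "lt r z b" unfolding limpt_def by auto
  have "\<forall>C\<in>Cs a. \<exists>d. lt r d b \<and> (\<forall>x\<in>C. lt r x b \<longrightarrow> (x,d) \<in> r)"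
  proof
    fix C assume C: "C \<in> Cs a"
    show "\<exists>d. lt r d b \<and> (\<forall>x\<in>C. lt r x b \<longrightarrow> (x,d) \<in> r)"
    proof (cases "C \<inter> underS r b = {}")
      case True
      then have "\<forall>x\<in>C. lt r x b \<longrightarrow> (x,z) \<in> r" by auto
      then show ?thesis using z by blast
    next
      case False
      have "\<not> limpt C b" using no C by blast
      then have "\<not> sup_is r (C \<inter> underS r b) b" using False unfolding limpt_def by blast
      then obtain d where d: "lt r d b" "\<forall>x\<in>C \<inter> underS r b. \<not> lt r d x" unfolding sup_is_def by blast
      have "\<forall>x\<in>C. lt r x b \<longrightarrow> (x,d) \<in> r"
      proof (intro ballI impI)
        fix x assume "x \<in> C" "lt r x b"
        then have "\<not> lt r d x" using d(2) by simp
        moreover have "x \<in> Field r" "d \<in> Field r" using ltF \<open>lt r x b\<close> d(1) by auto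
        ultimately show "(x,d) \<in> r" using not_lt by blast
      qed
      then show ?thesis using d by blast
    qed
  qed
  moreover have "finite (Cs a)" using fin aF by blast
  ultimately obtain m where m: "lt r m b" "\<forall>C\<in>Cs a. \<exists>d. (d,m) \<in> r \<and> (\<forall>x\<in>C. lt r x b \<longrightarrow> (x,d) \<in> r)"
    using bound_below[OF z(2), of "Cs a" "\<lambda>C d. \<forall>x\<in>C. lt r x b \<longrightarrow> (x,d) \<in> r"] by blast
  have "\<exists>f\<in>F \<inter> underS r b. lt r m f" using lb m(1) unfolding limpt_def sup_is_def by blast
  then obtain f where f: "f \<in> F" "lt r f b" "lt r m f" by auto
  have "lt r f a" using f(2) ba lt_trans by blast
  then have "f \<in> \<Union>(Cs a)" using sub f(1) by auto
  then obtain C where C: "C \<in> Cs a" "f \<in> C" by blast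
  obtain d where "(d,m) \<in> r" "\<forall>x\<in>C. lt r x b \<longrightarrow> (x,d) \<in> r" using m(2) C(1) by blast
  then have "(d,m) \<in> r" "(f,d) \<in> r" using C(2) f(2) by auto
  then have "(f,m) \<in> r" using rtrans by blast
  then show False using f(3) lt_not_le by blast
qed

definition K :: "nat \<Rightarrow> 'a set" where "K n = {a\<in>S \<inter> B. card (Cs a) \<le> n}"

lemma K_unb: "\<exists>n. \<forall>g\<in>Field r. \<exists>a\<in>K n. lt r g a"
proof (rule ccontr)
  assume "\<not> ?thesis"
  then have "\<forall>n. \<exists>b. b \<in> Field r \<and> (\<forall>a\<in>K n. \<not> lt r b a)" by blast
  from choice[OF this] obtain bd where bd0: "\<forall>n. bd n \<in> Field r \<and> (\<forall>a\<in>K n. \<not> lt r (bd n) a)" by blast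
  then have bd: "\<And>n. bd n \<in> Field r" "\<And>n. \<forall>a\<in>K n. \<not> lt r (bd n) a" by auto
  obtain c where c: "c \<in> Field r" "\<forall>n. (bd n, c) \<in> r" using countable_bound[of bd] bd by blast
  obtain a where a: "a \<in> S \<inter> B" "lt r c a" using S2_unb[OF c(1)] by blast
  have "a \<in> K (card (Cs a))" using a K_def by blast
  then have "\<not> lt r (bd (card (Cs a))) a" using bd by blast
  then have "(a, bd (card (Cs a))) \<in> r" using not_lt bd(1) ltF a(2) by blast
  then have "(a,c) \<in> r" using c rtrans by blast
  then show False using a(2) lt_not_le by blast
qed

lemma enum_ex:
  assumes "finite A" "A \<noteq> {}" "card A \<le> n"
  shows "\<exists>f. f ` {..<n} = A"
proof -
  obtain h where h: "bij_betw h {0..<card A} A" using ex_bij_betw_nat_finite[OF assms(1)] by blast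
  have cA: "card A > 0" using assms by auto
  define f where "f i = h (min i (card A - 1))" for i
  have "f ` {..<n} = A"
  proof
    show "f ` {..<n} \<subseteq> A"
    proof
      fix y assume "y \<in> f ` {..<n}"
      then obtain i where "y = h (min i (card A - 1))" unfolding f_def by blast
      moreover have "min i (card A - 1) \<in> {0..<card A}" using cA by simp
      ultimately show "y \<in> A" using h unfolding bij_betw_def by blast
    qed
    show "A \<subseteq> f ` {..<n}"
    proof
      fix x assume "x \<in> A"
      then obtain j where j: "j < card A" "x = h j" using h unfolding bij_betw_def by (metis atLeastLessThan_iff imageE)
      then have "min j (card A - 1) = j" by simp
      then have "f j = x" unfolding f_def using j by simp
      moreover have "j \<in> {..<n}" using j assms(3) by simp
      ultimately show "x \<in> f ` {..<n}" by (metis imageI)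
    qed
  qed
  then show ?thesis by blast
qed

end


locale N = M +
  fixes n :: nat
  assumes Kunb: "\<forall>g\<in>Field r. \<exists>a\<in>K n. lt r g a"
begin
definition unb :: "'a set \<Rightarrow> bool" where "unb X \<longleftrightarrow> (\<forall>g\<in>Field r. \<exists>a\<in>X. lt r g a)"
definition good :: "'a set set \<Rightarrow> bool" where
  "good \<F> \<longleftrightarrow> (\<forall>G. finite G \<longrightarrow> G \<subseteq> \<F> \<longrightarrow> unb (K n \<inter> \<Inter>G))"

lemma unb_mono: "X \<subseteq> Y \<Longrightarrow> unb X \<Longrightarrow> unb Y" unfolding unb_def by blast
lemma unb_Un: assumes "\<not> unb X" "\<not> unb Y" shows "\<not> unb (X \<union> Y)"
proof
  assume u: "unb (X \<union> Y)"
  obtain g1 where g1: "g1 \<in> Field r" "\<forall>a\<in>X. \<not> lt r g1 a" using assms(1) unfolding unb_def by blast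
  obtain g2 where g2: "g2 \<in> Field r" "\<forall>a\<in>Y. \<not> lt r g2 a" using assms(2) unfolding unb_def by blast
  obtain m where m: "m \<in> Field r" "(g1,m) \<in> r" "(g2,m) \<in> r" using max_ex[OF g1(1) g2(1)] by blast
  obtain a where a: "a \<in> X \<union> Y" "lt r m a" using u m(1) unfolding unb_def by blast
  show False
  proof (cases "a \<in> X")
    case True
    then show False using g1(2) le_lt_trans[OF m(2) a(2)] by blast
  next
    case False
    then show False using a(1) g2(2) le_lt_trans[OF m(3) a(2)] by blast
  qed
qed
lemma unb_empty: "\<not> unb {}" unfolding unb_def using Fne by blast

lemma good_empty: "good {}" unfolding good_def unb_def using Kunb by auto

lemma ex_max: "\<exists>Mx. good Mx \<and> (\<forall>X. good X \<longrightarrow> Mx \<subseteq> X \<longrightarrow> X = Mx)"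
proof -
  have "\<forall>C\<in>chains {X. good X}. \<Union>C \<in> {X. good X}"
  proof
    fix C assume C: "C \<in> chains {X. good X}"
    have "good (\<Union>C)" unfolding good_def
    proof (intro allI impI)
      fix G assume G: "finite G" "G \<subseteq> \<Union>C"
      show "unb (K n \<inter> \<Inter>G)"
      proof (cases "G = {}")
        case True then show ?thesis using good_empty unfolding good_def by blast
      next
        case False
        then have "C \<noteq> {}" using G by blast
        moreover have "subset.chain {X. good X} C" using C chains_alt_def by blast
        ultimately obtain B0 where "B0 \<in> C" "G \<subseteq> B0" using finite_subset_Union_chain[OF G(1) G(2)] by blast
        moreover have "good B0" using \<open>B0 \<in> C\<close> C chainsD2 by blast
        ultimately show ?thesis using G(1) unfolding good_def by blast
      qed
    qed
    then show "\<Union>C \<in> {X. good X}" by blast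
  qed
  from Zorn_Lemma[OF this] show ?thesis by blast
qed

definition Mx where "Mx = (SOME Mx. good Mx \<and> (\<forall>X. good X \<longrightarrow> Mx \<subseteq> X \<longrightarrow> X = Mx))"
lemma Mx: "good Mx" "\<And>X. good X \<Longrightarrow> Mx \<subseteq> X \<Longrightarrow> X = Mx"
  using someI_ex[OF ex_max] unfolding Mx_def by blast+

lemma notin: assumes "Y \<notin> Mx" shows "\<exists>G. finite G \<and> G \<subseteq> Mx \<and> \<not> unb (K n \<inter> Y \<inter> \<Inter>G)"
proof -
  have "\<not> good (insert Y Mx)" using Mx assms by blast
  then obtain G where G: "finite G" "G \<subseteq> insert Y Mx" "\<not> unb (K n \<inter> \<Inter>G)" unfolding good_def by blast
  have "K n \<inter> Y \<inter> \<Inter>(G - {Y}) \<subseteq> K n \<inter> \<Inter>G" by blast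
  then have "\<not> unb (K n \<inter> Y \<inter> \<Inter>(G - {Y}))" using G(3) unb_mono by blast
  moreover have "finite (G - {Y})" "G - {Y} \<subseteq> Mx" using G by auto
  ultimately show ?thesis by blast
qed

lemma P1: "Y \<in> Mx \<or> - Y \<in> Mx"
proof (rule ccontr)
  assume "\<not> ?thesis"
  then obtain G1 G2 where G1: "finite G1" "G1 \<subseteq> Mx" "\<not> unb (K n \<inter> Y \<inter> \<Inter>G1)"
    and G2: "finite G2" "G2 \<subseteq> Mx" "\<not> unb (K n \<inter> - Y \<inter> \<Inter>G2)" using notin by meson
  have "unb (K n \<inter> \<Inter>(G1 \<union> G2))" using Mx(1) G1 G2 unfolding good_def by blast
  moreover have "K n \<inter> \<Inter>(G1 \<union> G2) \<subseteq> (K n \<inter> Y \<inter> \<Inter>G1) \<union> (K n \<inter> - Y \<inter> \<Inter>G2)" by blast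
  ultimately show False using unb_mono unb_Un G1(3) G2(3) by blast
qed

lemma tail: assumes g: "g \<in> Field r" shows "{a. lt r g a} \<in> Mx"
proof (rule ccontr)
  assume "{a. lt r g a} \<notin> Mx"
  then have "- {a. lt r g a} \<in> Mx" using P1 by blast
  then have "unb (K n \<inter> \<Inter>{- {a. lt r g a}})" using Mx(1) unfolding good_def by blast
  then show False using g unfolding unb_def by auto
qed

lemma P2: assumes Z: "Z \<in> Mx" and A: "finite A" and cov: "K n \<inter> Z \<subseteq> (\<Union>x\<in>A. f x)"
  shows "\<exists>x\<in>A. f x \<in> Mx"
proof (rule ccontr)
  assume "\<not> ?thesis"
  then have "\<forall>x\<in>A. - f x \<in> Mx" using P1 by blast
  then have "insert Z ((\<lambda>x. - f x) ` A) \<subseteq> Mx" using Z by blast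
  moreover have "finite (insert Z ((\<lambda>x. - f x) ` A))" using A by blast
  ultimately have "unb (K n \<inter> \<Inter>(insert Z ((\<lambda>x. - f x) ` A)))" using Mx(1) unfolding good_def by blast
  moreover have "K n \<inter> \<Inter>(insert Z ((\<lambda>x. - f x) ` A)) = {}" using cov by blast
  ultimately show False using unb_empty by simp
qed

lemma P3: assumes "finite G" "G \<subseteq> Mx" shows "\<exists>a. a \<in> K n \<and> (\<forall>X\<in>G. a \<in> X)"
proof -
  have "unb (K n \<inter> \<Inter>G)" using Mx(1) assms unfolding good_def by blast
  then show ?thesis unfolding unb_def using Fne by blast
qed
end

context N begin
lemma coh1: "\<forall>a\<in>Field r. Cs a \<noteq> {} \<and> (\<forall>C\<in>Cs a. club_in r (underS r a) C)"
  using coh unfolding coherent_seq_def by (elim conjE)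
lemma coh2: "\<forall>b\<in>Field r. \<forall>C\<in>Cs b. \<forall>a\<in>acc r C. C \<inter> underS r a \<in> Cs a"
  using coh unfolding coherent_seq_def by (elim conjE)
lemma Cs_club: "a \<in> Field r \<Longrightarrow> C \<in> Cs a \<Longrightarrow> club_in r (underS r a) C"
  using coh1 by blast
lemma Cs_ne: "a \<in> Field r \<Longrightarrow> Cs a \<noteq> {}"
  using coh1 by blast
lemma Cs_coh: "a \<in> Field r \<Longrightarrow> C \<in> Cs a \<Longrightarrow> b \<in> acc r C \<Longrightarrow> C \<inter> underS r b \<in> Cs b"
  using coh2 by blast
lemma coh_step:
  assumes a: "a \<in> Field r" and C: "C \<in> Cs a" and ba: "lt r b a" and l: "limpt C b"
  shows "C \<inter> underS r b \<in> Cs b"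
proof -
  have cl: "club_in r (underS r a) C" using Cs_club a C by blast
  have "b \<in> underS r a" using ba by simp
  then have bC: "b \<in> C" using cl l unfolding club_in_def limpt_def by blast
  have bF: "b \<in> Field r" using ltF ba by blast
  have "b \<in> acc r C" unfolding acc_def using bC bF rrefl[OF bF] l unfolding limpt_def by blast
  then show ?thesis using Cs_coh a C by blast
qed

definition e :: "'a \<Rightarrow> nat \<Rightarrow> 'a set" where "e a = (SOME f. f ` {..<n} = Cs a)"

lemma e_img: assumes "a \<in> K n" shows "e a ` {..<n} = Cs a"
proof -
  have aF: "a \<in> Field r" using assms unfolding K_def B_def by blast
  have "finite (Cs a)" using fin aF by blast
  moreover have "Cs a \<noteq> {}" using Cs_ne aF by blast
  moreover have "card (Cs a) \<le> n" using assms unfolding K_def by blast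
  ultimately have "\<exists>f. f ` {..<n} = Cs a" by (rule enum_ex)
  then show ?thesis unfolding e_def by (rule someI_ex)
qed

definition Ab :: "'a \<Rightarrow> nat \<Rightarrow> 'a set" where "Ab b i = {a. lt r b a \<and> limpt (e a i) b}"

lemma some_i: assumes b: "b \<in> B" shows "\<exists>i\<in>{..<n}. Ab b i \<in> Mx"
proof (rule P2)
  show "{a. lt r b a} \<in> Mx" using tail b B_def by blast
  show "finite {..<n}" by simp
  show "K n \<inter> {a. lt r b a} \<subseteq> (\<Union>i\<in>{..<n}. Ab b i)"
  proof
    fix a assume a: "a \<in> K n \<inter> {a. lt r b a}"
    then have "a \<in> S \<inter> B" unfolding K_def by blast
    then obtain C where C: "C \<in> Cs a" "limpt C b" using cover b a by blast
    have "C \<in> e a ` {..<n}" using e_img a C by blast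
    then obtain i where "i \<in> {..<n}" "e a i = C" by blast
    then show "a \<in> (\<Union>i\<in>{..<n}. Ab b i)" using C a unfolding Ab_def by blast
  qed
qed

definition Ei :: "nat \<Rightarrow> 'a set" where "Ei i = {b\<in>B. Ab b i \<in> Mx}"

lemma ex_i: "\<exists>i<n. \<forall>g\<in>Field r. \<exists>b\<in>Ei i. lt r g b"
proof (rule ccontr)
  assume "\<not> ?thesis"
  then have "\<forall>i\<in>{..<n}. \<exists>bd. bd \<in> Field r \<and> (\<forall>b\<in>Ei i. \<not> lt r bd b)" by blast
  from bchoice[OF this] obtain bd where bd: "\<forall>i\<in>{..<n}. bd i \<in> Field r \<and> (\<forall>b\<in>Ei i. \<not> lt r (bd i) b)" by blast
  have "finite (bd ` {..<n})" "bd ` {..<n} \<subseteq> Field r" using bd by auto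
  then obtain m where m: "m \<in> Field r" "\<forall>x\<in>bd ` {..<n}. (x,m) \<in> r" using finite_bound by blast
  obtain b where b: "b \<in> B" "lt r m b" using B_unb[OF m(1) m(1)] by blast
  obtain i where i: "i \<in> {..<n}" "Ab b i \<in> Mx" using some_i[OF b(1)] by blast
  then have "b \<in> Ei i" using b Ei_def by blast
  then have "\<not> lt r (bd i) b" using bd i by blast
  moreover have "(bd i, m) \<in> r" using m i by blast
  ultimately show False using b(2) le_lt_trans by blast
qed

definition i0 where "i0 = (SOME i. i < n \<and> (\<forall>g\<in>Field r. \<exists>b\<in>Ei i. lt r g b))"
lemma i0: "i0 < n" "\<forall>g\<in>Field r. \<exists>b\<in>Ei i0. lt r g b"
  using someI_ex[OF ex_i] unfolding i0_def by blast+

abbreviation E where "E \<equiv> Ei i0"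
definition V where "V b x = {a. e a i0 \<inter> underS r b = x}"

lemma xb_ex: assumes b: "b \<in> E" shows "\<exists>x\<in>Cs b. V b x \<in> Mx"
proof (rule P2)
  show "Ab b i0 \<in> Mx" using b Ei_def by blast
  have bF: "b \<in> Field r" using b Ei_def B_def by blast
  show "finite (Cs b)" using fin bF by blast
  show "K n \<inter> Ab b i0 \<subseteq> (\<Union>x\<in>Cs b. V b x)"
  proof
    fix a assume a: "a \<in> K n \<inter> Ab b i0"
    have aF: "a \<in> Field r" using a unfolding K_def B_def by blast
    have "e a i0 \<in> Cs a" using e_img i0(1) a by blast
    moreover have "lt r b a" "limpt (e a i0) b" using a unfolding Ab_def by auto
    ultimately have "e a i0 \<inter> underS r b \<in> Cs b" using coh_step[OF aF] by blast
    then show "a \<in> (\<Union>x\<in>Cs b. V b x)" unfolding V_def by blast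
  qed
qed

definition xb where "xb b = (SOME x. x \<in> Cs b \<and> V b x \<in> Mx)"
lemma xb: "b \<in> E \<Longrightarrow> xb b \<in> Cs b \<and> V b (xb b) \<in> Mx"
proof -
  assume "b \<in> E"
  then have "\<exists>x. x \<in> Cs b \<and> V b x \<in> Mx" using xb_ex by blast
  then show ?thesis unfolding xb_def by (rule someI_ex)
qed

lemma EF: "b \<in> E \<Longrightarrow> b \<in> Field r" unfolding Ei_def B_def by simp

lemma xb_club: "b \<in> E \<Longrightarrow> club_in r (underS r b) (xb b)" using xb Cs_club EF by metis

lemma consist:
  assumes b: "b \<in> E" and c: "c \<in> E" and bc: "lt r b c"
  shows "xb c \<inter> underS r b = xb b \<and> limpt (xb c) b"
proof -
  have fin4: "finite {Ab b i0, V b (xb b), Ab c i0, V c (xb c)}" by simp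
  have "Ab b i0 \<in> Mx" "Ab c i0 \<in> Mx" using b c unfolding Ei_def by auto
  moreover have "V b (xb b) \<in> Mx" "V c (xb c) \<in> Mx" using xb b c by auto
  ultimately have "{Ab b i0, V b (xb b), Ab c i0, V c (xb c)} \<subseteq> Mx" by simp
  then obtain a where "a \<in> K n" "\<forall>X\<in>{Ab b i0, V b (xb b), Ab c i0, V c (xb c)}. a \<in> X"
    using P3[OF fin4] by blast
  then have a: "limpt (e a i0) b" "e a i0 \<inter> underS r b = xb b" "e a i0 \<inter> underS r c = xb c"
    unfolding Ab_def V_def by auto
  have sub: "underS r b \<subseteq> underS r c" using lt_trans[OF _ bc] by auto
  have eq: "xb c \<inter> underS r b = e a i0 \<inter> underS r b" using a(3) sub by blast
  then show ?thesis using a(1,2) unfolding limpt_def by simp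
qed

definition D where "D = (\<Union>b\<in>E. xb b)"

lemma D_cut: assumes c: "c \<in> E" shows "D \<inter> underS r c = xb c"
proof
  have sub: "xb c \<subseteq> underS r c" using xb_club[OF c] unfolding club_in_def by blast
  show "xb c \<subseteq> D \<inter> underS r c" using sub c D_def by blast
  show "D \<inter> underS r c \<subseteq> xb c"
  proof
    fix y assume y: "y \<in> D \<inter> underS r c"
    then obtain b where b: "b \<in> E" "y \<in> xb b" unfolding D_def by blast
    have bF: "b \<in> Field r" and cF: "c \<in> Field r" using EF b c by auto
    consider "b = c" | "lt r b c" | "lt r c b" using rtotal[OF bF cF] unfolding lt_def by blast
    then show "y \<in> xb c"
    proof cases
      case 1 then show ?thesis using b by simp
    next
      case 2
      then have "xb c \<inter> underS r b = xb b" using consist b c by blast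
      then show ?thesis using b by blast
    next
      case 3
      then have "xb b \<inter> underS r c = xb c" using consist b c by blast
      then show ?thesis using b y by blast
    qed
  qed
qed

lemma E_above: "g \<in> Field r \<Longrightarrow> \<exists>b\<in>E. lt r g b" using i0(2) by blast

lemma thread: "is_thread r Cs D"
  unfolding is_thread_def
proof
  show "club_in r (Field r) D" unfolding club_in_def
  proof (intro conjI ballI impI)
    show "D \<subseteq> Field r"
    proof
      fix y assume "y \<in> D"
      then obtain b where b: "b \<in> E" "y \<in> xb b" unfolding D_def by blast
      then have "y \<in> underS r b" using xb_club[OF b(1)] unfolding club_in_def by blast
      then have "lt r y b" by simp
      then show "y \<in> Field r" using ltF by blast
    qed
  next
    fix g assume g: "g \<in> Field r"
    obtain b where b: "b \<in> E" "lt r g b" using E_above[OF g] by blast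
    have "g \<in> underS r b" using b(2) by simp
    then obtain c where "c \<in> xb b" "(g,c) \<in> r" using xb_club[OF b(1)] unfolding club_in_def by blast
    then show "\<exists>c\<in>D. (g, c) \<in> r" using b D_def by blast
  next
    fix g assume g: "g \<in> Field r" and h: "D \<inter> underS r g \<noteq> {} \<and> sup_is r (D \<inter> underS r g) g"
    obtain b where b: "b \<in> E" "lt r g b" using E_above[OF g] by blast
    have sub: "underS r g \<subseteq> underS r b" using lt_trans[OF _ b(2)] by auto
    have "D \<inter> underS r g = xb b \<inter> underS r g" using D_cut[OF b(1)] sub by blast
    then have "xb b \<inter> underS r g \<noteq> {} \<and> sup_is r (xb b \<inter> underS r g) g" using h by simp
    moreover have "g \<in> underS r b" using b(2) by simp
    ultimately have "g \<in> xb b" using xb_club[OF b(1)] unfolding club_in_def by blast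
    then show "g \<in> D" using b D_def by blast
  qed
  show "\<forall>a\<in>acc r D. D \<inter> underS r a \<in> Cs a"
  proof
    fix a assume a: "a \<in> acc r D"
    have aF: "a \<in> Field r" using a unfolding acc_def by blast
    obtain b where b: "b \<in> E" "lt r a b" using E_above[OF aF] by blast
    have sub: "underS r a \<subseteq> underS r b" using lt_trans[OF _ b(2)] by auto
    have eq: "D \<inter> underS r a = xb b \<inter> underS r a" using D_cut[OF b(1)] sub by blast
    have cl: "club_in r (underS r b) (xb b)" using xb_club[OF b(1)] .
    have "a \<in> underS r b" using b(2) by simp
    then obtain c where "c \<in> xb b" "(a,c) \<in> r" using cl unfolding club_in_def by blast
    moreover have "sup_is r (xb b \<inter> underS r a) a" using a eq unfolding acc_def by simp
    ultimately have "a \<in> acc r (xb b)" unfolding acc_def using aF by blast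
    then have "xb b \<inter> underS r a \<in> Cs a" using Cs_coh EF[OF b(1)] xb[OF b(1)] by blast
    then show "D \<inter> underS r a \<in> Cs a" using eq by simp
  qed
qed
end

theorem lemma2p8:
  fixes r :: "'a rel" and Cs :: "'a \<Rightarrow> 'a set set" and S F :: "'a set"
  assumes "Card_order r" and "regularCard r" and "(natLeq, r) \<in> ordLess"
    and "coherent_seq r Cs"
    and "\<forall>a\<in>Field r. finite (Cs a)"
    and "stationary r S"
    and "club_in r (Field r) F"
    and "\<forall>a\<in>S \<inter> acc r F. F \<inter> underS r a \<subseteq> \<Union>(Cs a)"
  shows "\<exists>D. is_thread r Cs D"
proof -
  interpret M r Cs S F using assms by unfold_locales
  obtain n where "\<forall>g\<in>Field r. \<exists>a\<in>K n. lt r g a" using K_unb by blast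
  then interpret N r Cs S F n by unfold_locales
  show ?thesis using thread by blast
qed

end
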